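(* Let $G_1$ and $G_2$ be two vertex-disjoint 2-edge-colored graphs with Hamiltonian alternating cycles $C_1=x_0x_1\cdots x_{2n-1}x_0$ and $C_2=y_0y_1\cdots y_{2m-1}y_0$, respectively, and let $G\in G_1\oplus G_2$. Suppose there is no good pair in $G$ (between $C_1$ and $C_2$), and that for each $i\in\{1,2\}$ there is a vertex of $C_i$ which is non-singular with respect to $C_{3-i}$. Then there exist $r\in[0,2m-1]$ and $s\in[0,2n-1]$ such that $x_0y_ry_{r+1}y_{r+2}x_0$ and $y_0x_sx_{s+1}x_{s+2}y_0$ are alternating 4-cycles (subscripts of $x$ taken modulo $2n$, of $y$ modulo $2m$).
   Context: All graphs are simple, with edges colored red or blue. An alternating cycle is a cycle in which consecutive edges have different colors; a Hamiltonian alternating cycle of a graph is an alternating cycle through all its vertices. For vertex-disjoint 2-edge-colored graphs $G_1,G_2$, the colored generalized sum $G_1\oplus G_2$ is the set of 2-edge-colored graphs $G$ with $V(G)=V(G_1)\cup V(G_2)$, $G\langle V(G_i)\rangle=G_i$ with the same coloring, and exactly one edge (of arbitrary fixed color) between each $u\in V(G_1)$ and $w\in V(G_2)$; these latter edges are the exterior edges. For $v$ on an alternating cycle $C$, $v^r$ (resp. $v^b$) is the neighbor of $v$ on $C$ with $vv^r$ red (resp. $vv^b$ blue). For an exterior edge $vw$ with $v\in V(C_1)$, $w\in V(C_2)$: if $vw$ is red, $vw,v^rw^r$ is a good pair if $v^rw^r$ is red; if $vw$ is blue, $vw,v^bw^b$ is a good pair if $v^bw^b$ is blue. A vertex $v\in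 V(C_i)$ is red-singular (blue-singular) with respect to $C_{3-i}$ if all edges between $v$ and $V(C_{3-i})$ are red (blue); it is singular if red- or blue-singular, and non-singular otherwise (i.e. it is incident with exterior edges of both colors towards $C_{3-i}$). *)

theory Defs
  imports Main
begin

datatype color = Red | Blue

text \<open>A 2-edge-colored simple graph: a vertex set and a symmetric, loopless partial
  colouring of pairs; ecol G u v = None means u and v are non-adjacent.\<close>
record 'a cgraph =
  verts :: "'a set"
  ecol  :: "'a \<Rightarrow> 'a \<Rightarrow> color option"

definition cgraph :: "'a cgraph \<Rightarrow> bool" where
  "cgraph G \<longleftrightarrow> finite (verts G)
     \<and> (\<forall>u v. ecol G u v = ecol G v u)
     \<and> (\<forall>u. ecol G u u = None)
     \<and> (\<forall>u v. ecol G u v \<noteq> None \<longrightarrow> u \<in> verts G \<and> v \<in> verts G)"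

definition induced :: "'a cgraph \<Rightarrow> 'a set \<Rightarrow> 'a cgraph" where
  "induced G S = \<lparr>verts = S, ecol = (\<lambda>u v. if u \<in> S \<and> v \<in> S then ecol G u v else None)\<rparr>"

definition cgsum :: "'a cgraph \<Rightarrow> 'a cgraph \<Rightarrow> 'a cgraph set" where
  "cgsum G1 G2 = {G. cgraph G \<and> verts G = verts G1 \<union> verts G2
      \<and> induced G (verts G1) = G1 \<and> induced G (verts G2) = G2
      \<and> (\<forall>u\<in>verts G1. \<forall>w\<in>verts G2. ecol G u w \<noteq> None)}"

definition alt_cycle :: "'a cgraph \<Rightarrow> 'a list \<Rightarrow> bool" where
  "alt_cycle G xs \<longleftrightarrow> (let k = length xs in k \<ge> 3 \<and> distinct xs
     \<and> (\<forall>i<k. ecol G (xs!i) (xs!((i+1) mod k)) \<noteq> None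
          \<and> ecol G (xs!i) (xs!((i+1) mod k)) \<noteq> ecol G (xs!((i+1) mod k)) (xs!((i+2) mod k))))"

definition ham_alt_cycle :: "'a cgraph \<Rightarrow> 'a list \<Rightarrow> bool" where
  "ham_alt_cycle G xs \<longleftrightarrow> alt_cycle G xs \<and> set xs = verts G"

text \<open>cyc_nbr G xs c v u: u is the neighbour v^c of v on the cycle xs
  (the cycle neighbour joined to v by an edge of colour c).\<close>
definition cyc_nbr :: "'a cgraph \<Rightarrow> 'a list \<Rightarrow> color \<Rightarrow> 'a \<Rightarrow> 'a \<Rightarrow> bool" where
  "cyc_nbr G xs c v u \<longleftrightarrow> (let k = length xs in \<exists>i<k. xs!i = v
     \<and> (u = xs!((i+1) mod k) \<or> u = xs!((i+k-1) mod k)) \<and> ecol G v u = Some c)"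

definition has_good_pair :: "'a cgraph \<Rightarrow> 'a list \<Rightarrow> 'a list \<Rightarrow> bool" where
  "has_good_pair G C1 C2 \<longleftrightarrow> (\<exists>v\<in>set C1. \<exists>w\<in>set C2. \<exists>c v' w'.
     ecol G v w = Some c \<and> cyc_nbr G C1 c v v' \<and> cyc_nbr G C2 c w w'
     \<and> ecol G v' w' = Some c)"

definition red_singular :: "'a cgraph \<Rightarrow> 'a \<Rightarrow> 'a set \<Rightarrow> bool" where
  "red_singular G v W \<longleftrightarrow> (\<forall>w\<in>W. ecol G v w = Some Red)"

definition blue_singular :: "'a cgraph \<Rightarrow> 'a \<Rightarrow> 'a set \<Rightarrow> bool" where
  "blue_singular G v W \<longleftrightarrow> (\<forall>w\<in>W. ecol G v w = Some Blue)"

definition singular :: "'a cgraph \<Rightarrow> 'a \<Rightarrow> 'a set \<Rightarrow> bool" where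
  "singular G v W \<longleftrightarrow> red_singular G v W \<or> blue_singular G v W"

end

theory Submission
  imports Defs
begin

fun cflip :: "color \<Rightarrow> color" where
  "cflip Red = Blue" | "cflip Blue = Red"

lemma cflip_neq[simp]: "cflip c \<noteq> c" by (cases c) auto
lemma cflip_neq2[simp]: "c \<noteq> cflip c" by (cases c) auto
lemma cflip_cflip[simp]: "cflip (cflip c) = c" by (cases c) auto
lemma neq_cflip: "a \<noteq> c \<Longrightarrow> a = cflip c" by (cases a; cases c) auto
lemma cflip_eq_iff[simp]: "(cflip a = cflip b) = (a = b)" by (cases a; cases b) auto

definition fl :: "int \<Rightarrow> color \<Rightarrow> color" where
  "fl k c = (if even k then c else cflip c)"

lemma alt_nat:
  assumes alt: "\<And>i. e (i+1) = cflip (e i)"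
  shows "e (i + int k) = fl (int k) (e i)"
proof (induction k)
  case 0 then show ?case by (simp add: fl_def)
next
  case (Suc k)
  have "e (i + int (Suc k)) = cflip (e (i + int k))" using alt[of "i + int k"] by (simp add: algebra_simps)
  then show ?case using Suc by (simp add: fl_def)
qed

lemma alt_int:
  assumes alt: "\<And>i. e (i+1) = cflip (e i)"
  shows "e (i + a) = fl a (e i)"
proof (cases "a \<ge> 0")
  case True
  then show ?thesis using alt_nat[where e=e, OF alt, of i "nat a"] by simp
next
  case False
  have "e i = e ((i + a) + int (nat (-a)))" using False by simp
  also have "\<dots> = fl (int (nat (-a))) (e (i+a))" by (rule alt_nat[where e=e, OF alt])
  finally show ?thesis using False by (auto simp: fl_def)
qed

lemma walk:
  assumes ealt: "\<And>i. e (i+1) = cflip (e i)"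
    and dalt: "\<And>j. d (j+1) = cflip (d j)"
    and nogood: "\<And>i j. col (i + (if e i = col i j then 1 else -1)) (j + (if d j = col i j then 1 else -1)) \<noteq> col i j"
    and c0: "col i j = c"
    and s: "s = (if e i = c then 1 else -1)"
    and t: "t = (if d j = c then 1 else -1)"
  shows "col (i + int k * s) (j + int k * t) = fl (int k) c
     \<and> (e (i + int k * s) = fl (int k) c) = (s = 1)
     \<and> (d (j + int k * t) = fl (int k) c) = (t = 1)"
proof (induction k)
  case 0 then show ?case using c0 s t by (simp add: fl_def)
next
  case (Suc k)
  define ik where "ik = i + int k * s"
  define jk where "jk = j + int k * t"
  define ck where "ck = fl (int k) c"
  have IH: "col ik jk = ck" "(e ik = ck) = (s = 1)" "(d jk = ck) = (t = 1)"
    using Suc unfolding ik_def jk_def ck_def by auto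
  have ss: "s = 1 \<or> s = -1" using s by auto
  have ts: "t = 1 \<or> t = -1" using t by auto
  have "col (ik + s) (jk + t) \<noteq> ck"
    using nogood[of ik jk] IH ss ts by auto
  then have A: "col (ik + s) (jk + t) = cflip ck" by (rule neq_cflip)
  have B: "(e (ik + s) = cflip ck) = (s = 1)"
  proof (cases "s = 1")
    case True then show ?thesis using ealt[of ik] IH by auto
  next
    case False
    then have "s = -1" using ss by auto
    moreover have "e ik = cflip (e (ik - 1))" using ealt[of "ik - 1"] by simp
    ultimately show ?thesis using IH False by (metis cflip_cflip cflip_neq add_uminus_conv_diff)
  qed
  have C: "(d (jk + t) = cflip ck) = (t = 1)"
  proof (cases "t = 1")
    case True then show ?thesis using dalt[of jk] IH by auto
  next
    case False
    then have "t = -1" using ts by auto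
    moreover have "d jk = cflip (d (jk - 1))" using dalt[of "jk - 1"] by simp
    ultimately show ?thesis using IH False by (metis cflip_cflip cflip_neq add_uminus_conv_diff)
  qed
  have e1: "i + int (Suc k) * s = ik + s" unfolding ik_def by (simp add: algebra_simps)
  have e2: "j + int (Suc k) * t = jk + t" unfolding jk_def by (simp add: algebra_simps)
  have e3: "fl (int (Suc k)) c = cflip ck" unfolding ck_def fl_def by auto
  show ?case unfolding e1 e2 e3 using A B C by blast
qed

lemma even_mod_even: "even (N::int) \<Longrightarrow> even (i mod N) = even i"
  by (metis dvd_mod_iff even_mod_2_iff mod_mod_cancel)

lemma fl_even[simp]: "even k \<Longrightarrow> fl k c = c" by (simp add: fl_def)
lemma fl_odd[simp]: "odd k \<Longrightarrow> fl k c = cflip c" by (simp add: fl_def)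

locale absG =
  fixes col :: "int \<Rightarrow> int \<Rightarrow> color" and e d :: "int \<Rightarrow> color" and N M :: int
  assumes Npos: "N > 0" and Mpos: "M > 0" and Nev: "even N" and Mev: "even M"
    and colper: "\<And>i j. col i j = col (i mod N) (j mod M)"
    and ealt: "\<And>i. e (i+1) = cflip (e i)"
    and dalt: "\<And>j. d (j+1) = cflip (d j)"
    and nogood: "\<And>i j. col (i + (if e i = col i j then 1 else -1)) (j + (if d j = col i j then 1 else -1)) \<noteq> col i j"
begin

lemma reach:
  assumes "col 0 j = c" "s = (if e 0 = c then 1 else -1)" "t = (if d j = c then 1 else -1)"
    and "(int k * s) mod N = i' mod N" and "j + int k * t = j'"
  shows "col i' j' = fl (int k) c"
proof -
  have "col (0 + int k * s) (j + int k * t) = fl (int k) c"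
    using walk[where e=e and d=d and col=col, OF ealt dalt nogood assms(1-3)] by blast
  then have "col (int k * s) j' = fl (int k) c" using assms(5) by simp
  moreover have "col (int k * s) j' = col i' j'"
    using colper[of "int k * s" j'] colper[of i' j'] assms(4) by simp
  ultimately show ?thesis by simp
qed

lemma k1: "int (nat (i' mod N)) * 1 mod N = i' mod N" "even (int (nat (i' mod N))) = even i'"
  using Npos Nev by (simp_all add: even_mod_even)
lemma k2: "int (nat ((-i') mod N)) * (-1) mod N = i' mod N" "even (int (nat ((-i') mod N))) = even i'"
proof -
  show "int (nat ((-i') mod N)) * (-1) mod N = i' mod N" using Npos
    by (simp add: mod_minus_eq)
  show "even (int (nat ((-i') mod N))) = even i'" using Npos Nev by (simp add: even_mod_even)
qed

lemma caseAB:
  assumes h: "\<And>j. col 0 j = (if b then d j else cflip (d j))"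
  shows "col i' j' = (if b then d j' else cflip (d j'))"
proof -
  define tb :: int where "tb = (if b then 1 else -1)"
  have tj: "\<And>j. (if d j = col 0 j then 1 else -1) = tb" using h unfolding tb_def
    by (metis cflip_neq)
  have tbo: "odd tb" unfolding tb_def by simp
  define k1 where "k1 = nat (i' mod N)"
  define j1 where "j1 = j' - int k1 * tb"
  define k2 where "k2 = nat ((-i') mod N)"
  define j2 where "j2 = j' - int k2 * tb"
  have dj1: "d j' = fl (int k1) (d j1)"
    using alt_int[where e=d, OF dalt, of j1 "int k1 * tb"] tbo unfolding j1_def fl_def by simp
  have dj2: "d j' = fl (int k2) (d j2)"
    using alt_int[where e=d, OF dalt, of j2 "int k2 * tb"] tbo unfolding j2_def fl_def by simp
  have p1: "even (int k1) = even i'" "even (int k2) = even i'" using k1 k2 unfolding k1_def k2_def by auto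
  have d12: "d j1 = d j2"
  proof -
    have "j1 = j2 + (int k2 - int k1) * tb" unfolding j1_def j2_def by (simp add: algebra_simps)
    moreover have "even ((int k2 - int k1) * tb)" using p1 by auto
    ultimately show ?thesis using alt_int[where e=d, OF dalt, of j2 "(int k2 - int k1) * tb"] by simp
  qed
  show ?thesis
  proof (cases "e 0 = col 0 j1")
    case True
    have "col i' j' = fl (int k1) (col 0 j1)"
      apply (rule reach[where s=1 and t=tb])
      using True tj[of j1] k1 unfolding k1_def j1_def by auto
    then show ?thesis using dj1 h[of j1] by (auto simp: fl_def)
  next
    case False
    have "col 0 j2 = col 0 j1" using h[of j1] h[of j2] d12 by simp
    then have "e 0 \<noteq> col 0 j2" using False by simp
    then have "col i' j' = fl (int k2) (col 0 j2)"
      apply (intro reach[where s="-1" and t=tb])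
      using tj[of j2] k2 unfolding k2_def j2_def by auto
    then show ?thesis using dj2 h[of j2] by (auto simp: fl_def)
  qed
qed

lemma caseC:
  assumes h: "\<And>j. col 0 j = a"
  shows "col i' j' = fl i' a"
proof -
  define s :: int where "s = (if e 0 = a then 1 else -1)"
  define k where "k = (if s = 1 then nat (i' mod N) else nat ((-i') mod N))"
  have kk: "int k * s mod N = i' mod N \<and> even (int k) = even i'"
  proof (cases "s = 1")
    case True
    then have "k = nat (i' mod N)" by (simp add: k_def)
    then show ?thesis using k1[of i'] True by metis
  next
    case False
    then have "s = -1" unfolding s_def by (auto split: if_splits)
    moreover have "k = nat ((-i') mod N)" using False by (simp add: k_def)
    ultimately show ?thesis using k2[of i'] by metis
  qed
  then have km: "int k * s mod N = i' mod N" and kp: "even (int k) = even i'" by auto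
  define j1 where "j1 = j' - int k"
  show ?thesis
  proof (cases "d j1 = a")
    case True
    have "col i' j' = fl (int k) a"
      apply (rule reach[where s=s and t=1 and j=j1])
      using True h km unfolding s_def j1_def by auto
    then show ?thesis using kp by (simp add: fl_def)
  next
    case False
    have "d (j1 + 2 * int k) = d j1" using alt_int[where e=d, OF dalt, of j1 "2 * int k"] by simp
    then have "d (j' + int k) \<noteq> a" using False unfolding j1_def by (simp add: algebra_simps)
    then have "col i' j' = fl (int k) a"
      apply (intro reach[where s=s and t="-1" and j="j' + int k"])
      using h km unfolding s_def by auto
    then show ?thesis using kp by (simp add: fl_def)
  qed
qed

lemma main:
  assumes ns1: "\<exists>i j1 j2. col i j1 \<noteq> col i j2" and ns2: "\<exists>j i1 i2. col i1 j \<noteq> col i2 j"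
  shows "\<exists>r. col 0 r = d (r+1) \<and> col 0 (r+2) = d r"
proof (rule ccontr)
  assume H: "\<not> ?thesis"
  define g where "g r = (col 0 r = d r)" for r
  have d2: "d (r+2) = d r" for r using dalt[of "r+1"] dalt[of r] by (simp add: add.assoc)
  have step: "g (r+2) \<Longrightarrow> g r" for r
  proof (rule ccontr)
    assume "g (r+2)" "\<not> g r"
    then have "col 0 r = d (r+1)" "col 0 (r+2) = d r" unfolding g_def using dalt[of r] d2[of r]
      by (auto intro: neq_cflip)
    then show False using H by blast
  qed
  have stepk: "g (r + 2 * int k) \<Longrightarrow> g r" for r k
  proof (induction k)
    case 0 then show ?case by simp
  next
    case (Suc k)
    then have "g (r + 2 * int k + 2)" by (simp add: algebra_simps)
    then show ?case using Suc step by blast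
  qed
  have gper: "g (r + M * q) = g r" for r q
  proof -
    have "col 0 (r + M * q) = col 0 r" using colper[of 0 "r + M*q"] colper[of 0 r] by simp
    moreover have "d (r + M * q) = d r" using alt_int[where e=d, OF dalt, of r "M*q"] Mev by simp
    ultimately show ?thesis unfolding g_def by simp
  qed
  obtain m0 where m0: "M = 2 * m0" using Mev by blast
  have m0p: "m0 \<ge> 1" using Mpos m0 by simp
  have par: "g r \<Longrightarrow> g (r + 2 * q)" for r q
  proof (cases "q \<le> 0")
    case True
    assume "g r"
    then show ?thesis using stepk[of "r + 2*q" "nat (-q)"] True by simp
  next
    case False
    assume "g r"
    then have "g (r + M * q)" using gper by simp
    moreover have "r + M * q = (r + 2 * q) + 2 * int (nat ((m0 - 1) * q))"
    proof -
      have "(m0 - 1) * q \<ge> 0" using m0p False by simp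
      then have "int (nat ((m0 - 1) * q)) = (m0 - 1) * q" by simp
      then show ?thesis unfolding m0 by (simp add: algebra_simps)
    qed
    ultimately show ?thesis using stepk by metis
  qed
  have gj: "g j = (if even j then g 0 else g 1)" for j
  proof (cases "even j")
    case True
    then obtain q where q: "j = 2 * q" by blast
    have "g 0 \<Longrightarrow> g j" using par[of 0 q] q by simp
    moreover have "g j \<Longrightarrow> g 0" using par[of j "-q"] q by simp
    ultimately show ?thesis using True by auto
  next
    case False
    then obtain q where q: "j = 2 * q + 1" by (blast elim: oddE)
    have "g 1 \<Longrightarrow> g j" using par[of 1 q] q by (simp add: algebra_simps)
    moreover have "g j \<Longrightarrow> g 1" using par[of j "-q"] q by (simp add: algebra_simps)
    ultimately show ?thesis using False by auto
  qed
  have d0: "d j = fl j (d 0)" for j using alt_int[where e=d, OF dalt, of 0 j] by simp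
  show False
  proof (cases "g 0 = g 1")
    case True
    have "col 0 j = (if g 0 then d j else cflip (d j))" for j
    proof -
      have "g j = g 0" using gj[of j] True by auto
      then show ?thesis unfolding g_def by (auto intro: neq_cflip)
    qed
    then have "col i j = (if g 0 then d j else cflip (d j))" for i j by (rule caseAB)
    then show False using ns2 by auto
  next
    case False
    define a where "a = (if g 0 then d 0 else cflip (d 0))"
    have "col 0 j = a" for j
      using gj[of j] False d0[of j] unfolding g_def a_def by (cases "even j") (auto intro: neq_cflip)
    then have "col i j = fl i a" for i j by (rule caseC)
    then show False using ns1 by auto
  qed
qed

end


lemma idx_add: assumes "N > 0" shows "nat ((i + int k) mod int N) = (nat (i mod int N) + k) mod N"
proof -
  have "(i + int k) mod int N = (i mod int N + int k) mod int N" by (simp add: mod_add_left_eq)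
  moreover have "i mod int N \<ge> 0" using assms by simp
  ultimately show ?thesis using assms by (simp add: nat_mod_distrib nat_add_distrib)
qed

lemma idx_sub1: assumes "N > 0" shows "nat ((i - 1) mod int N) = (nat (i mod int N) + N - 1) mod N"
proof -
  define a where "a = i mod int N"
  have a0: "0 \<le> a" "a < int N" using assms unfolding a_def by simp_all
  have "(i - 1) mod int N = (a - 1) mod int N" unfolding a_def by (simp add: mod_diff_left_eq)
  also have "\<dots> = (a - 1 + int N) mod int N" by simp
  finally have e1: "(i - 1) mod int N = (a + int N - 1) mod int N" by (simp add: algebra_simps)
  have nn: "a + int N - 1 \<ge> 0" using a0 assms by simp
  have "nat ((a + int N - 1) mod int N) = nat (a + int N - 1) mod N"
    using nn by (simp add: nat_mod_distrib)
  also have "nat (a + int N - 1) = nat a + N - 1" using a0 assms by simp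
  finally show ?thesis using e1 unfolding a_def by simp
qed

lemma mod_shift_ne:
  fixes i k N :: int
  assumes "0 < k" "k < N" shows "(i + k) mod N \<noteq> i mod N"
proof
  assume "(i + k) mod N = i mod N"
  then have "N dvd (i + k) - i" by (simp add: mod_eq_dvd_iff)
  then have "N dvd k" by simp
  then have "N \<le> k" using assms by (simp add: zdvd_imp_le)
  then show False using assms by simp
qed

lemma alt4: assumes "distinct [a,b,c,d]" "ecol G a b = Some p" "ecol G b c = Some q" "ecol G c d = Some r" "ecol G d a = Some s"
   "p\<noteq>q" "q\<noteq>r" "r\<noteq>s" "s\<noteq>p" shows "alt_cycle G [a,b,c,d]"
proof -
  have L: "\<forall>i<4. Q i" if "Q 0" "Q 1" "Q 2" "Q 3" for Q :: "nat \<Rightarrow> bool"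
  proof (intro allI impI)
    fix i :: nat assume "i < 4"
    then have "i = 0 \<or> i = 1 \<or> i = 2 \<or> i = 3" by auto
    then show "Q i" using that by blast
  qed
  have e: "[a,b,c,d]!0 = a" "[a,b,c,d]!1 = b" "[a,b,c,d]!2 = c" "[a,b,c,d]!3 = d"
    by simp_all
  have len: "length [a,b,c,d] = 4" by simp
  show ?thesis unfolding alt_cycle_def Let_def len
    apply (intro conjI)
      apply simp
    using assms(1) apply simp
    apply (rule L) using assms by (simp_all add: e)
qed

locale cyc =
  fixes G H :: "'a cgraph" and V :: "'a set" and x :: "nat \<Rightarrow> 'a" and N :: nat and X :: "int \<Rightarrow> 'a"
  assumes gG: "cgraph G" and ind: "induced G V = H" and ham: "ham_alt_cycle H (map x [0..<N])"
    and Xd: "\<And>i. X i = x (nat (i mod int N))"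
begin

lemma altH: "alt_cycle H (map x [0..<N])" and setH: "set (map x [0..<N]) = verts H"
  using ham unfolding ham_alt_cycle_def by auto

lemma N3: "N \<ge> 3" using altH unfolding alt_cycle_def Let_def by simp
lemma Npos: "N > 0" using N3 by simp

lemma vertsH: "verts H = V" using ind unfolding induced_def by auto

lemma ecolH: "u \<in> V \<Longrightarrow> v \<in> V \<Longrightarrow> ecol H u v = ecol G u v"
  using ind unfolding induced_def by auto

lemma xin: "a < N \<Longrightarrow> x a \<in> V" using setH vertsH by auto

lemma Xnat: "a < N \<Longrightarrow> X (int a) = x a" using Xd by simp

lemma Xidx: "nat (i mod int N) < N" using Npos by (simp add: nat_less_iff)

lemma Xin: "X i \<in> V" using Xd xin Xidx by simp

lemma Xadd: "X (i + int k) = x ((nat (i mod int N) + k) mod N)" using Xd idx_add[OF Npos] by simp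

lemma Xsub: "X (i - 1) = x ((nat (i mod int N) + N - 1) mod N)" using Xd idx_sub1[OF Npos] by simp

lemma nthx: "a < N \<Longrightarrow> map x [0..<N] ! a = x a" by simp

lemma dist: "a < N \<Longrightarrow> b < N \<Longrightarrow> x a = x b \<Longrightarrow> a = b"
  using altH unfolding alt_cycle_def Let_def by (auto simp: distinct_conv_nth)

lemma Xinj: "X i = X j \<Longrightarrow> i mod int N = j mod int N"
proof -
  assume "X i = X j"
  then have "nat (i mod int N) = nat (j mod int N)" using dist Xidx Xd by metis
  then show ?thesis using Npos by (simp add: eq_nat_nat_iff)
qed

lemma alt_step: "ecol G (X i) (X (i+1)) \<noteq> None \<and> ecol G (X i) (X (i+1)) \<noteq> ecol G (X (i+1)) (X (i+2))"
proof -
  define a where "a = nat (i mod int N)"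
  have a: "a < N" unfolding a_def by (rule Xidx)
  have A: "ecol H (x a) (x ((a+1) mod N)) \<noteq> None \<and> ecol H (x a) (x ((a+1) mod N)) \<noteq> ecol H (x ((a+1) mod N)) (x ((a+2) mod N))"
    using altH a Npos unfolding alt_cycle_def Let_def by auto
  have X0: "X i = x a" unfolding a_def Xd ..
  have X1: "X (i+1) = x ((a+1) mod N)" using Xadd[of i 1] unfolding a_def by simp
  have X2: "X (i+2) = x ((a+2) mod N)" using Xadd[of i 2] unfolding a_def by simp
  show ?thesis using A unfolding X0 X1 X2 using ecolH xin a Npos by (simp add: X0[symmetric] X1[symmetric] X2[symmetric] Xin)
qed

definition ec :: "int \<Rightarrow> color" where "ec i = the (ecol G (X i) (X (i+1)))"

lemma ec: "ecol G (X i) (X (i+1)) = Some (ec i)" using alt_step[of i] unfolding ec_def by auto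

lemma ec_alt: "ec (i+1) = cflip (ec i)"
proof -
  have "ecol G (X (i+1)) (X (i+1+1)) = Some (ec (i+1))" by (rule ec)
  then have "ecol G (X (i+1)) (X (i+2)) = Some (ec (i+1))" by (simp add: add.assoc)
  then have "ec i \<noteq> ec (i+1)" using alt_step[of i] ec[of i] by auto
  then show ?thesis by (metis neq_cflip)
qed

lemma symG: "ecol G u v = ecol G v u" using gG unfolding cgraph_def by auto

lemma nbr_fwd: "ecol G (X i) (X (i+1)) = Some c \<Longrightarrow> cyc_nbr G (map x [0..<N]) c (X i) (X (i+1))"
proof -
  assume h: "ecol G (X i) (X (i+1)) = Some c"
  define a where "a = nat (i mod int N)"
  have a: "a < N" unfolding a_def by (rule Xidx)
  have a1: "(a + 1) mod N < N" using Npos by simp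
  have "map x [0..<N] ! a = X i" using a unfolding a_def Xd by simp
  moreover have "map x [0..<N] ! ((a + 1) mod N) = X (i+1)" using a1 Xadd[of i 1] unfolding a_def by simp
  ultimately show ?thesis unfolding cyc_nbr_def Let_def using a h by auto
qed

lemma nbr_bwd: "ecol G (X i) (X (i-1)) = Some c \<Longrightarrow> cyc_nbr G (map x [0..<N]) c (X i) (X (i-1))"
proof -
  assume h: "ecol G (X i) (X (i-1)) = Some c"
  define a where "a = nat (i mod int N)"
  have a: "a < N" unfolding a_def by (rule Xidx)
  have a1: "(a + N - 1) mod N < N" using Npos by simp
  have "map x [0..<N] ! a = X i" using a unfolding a_def Xd by simp
  moreover have "map x [0..<N] ! ((a + N - 1) mod N) = X (i-1)" using a1 Xsub[of i] unfolding a_def by simp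
  ultimately show ?thesis unfolding cyc_nbr_def Let_def using a h by auto
qed

lemma nbr: "cyc_nbr G (map x [0..<N]) c (X i) (X (i + (if ec i = c then 1 else -1)))"
proof (cases "ec i = c")
  case True then show ?thesis using nbr_fwd[OF ec[of i]] by simp
next
  case False
  have "ec i = cflip (ec (i-1))" using ec_alt[of "i-1"] by simp
  then have "ec (i-1) = c" using False by (metis neq_cflip cflip_cflip)
  then have "ecol G (X i) (X (i-1)) = Some c" using ec[of "i-1"] symG by simp
  then show ?thesis using nbr_bwd False by simp
qed

lemma setX: "v \<in> set (map x [0..<N]) \<Longrightarrow> \<exists>a<N. v = X (int a)" using Xnat by auto
lemma Xset: "X i \<in> set (map x [0..<N])" using Xd Xidx by auto

end

theorem lemma3p9:
  fixes G1 G2 G :: "'a cgraph" and x y :: "nat \<Rightarrow> 'a" and n m :: nat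
  assumes "cgraph G1" and "cgraph G2"
    and "verts G1 \<inter> verts G2 = {}"
    and "ham_alt_cycle G1 (map x [0..<2*n])"
    and "ham_alt_cycle G2 (map y [0..<2*m])"
    and "G \<in> cgsum G1 G2"
    and "\<not> has_good_pair G (map x [0..<2*n]) (map y [0..<2*m])"
    and "\<exists>v\<in>set (map x [0..<2*n]). \<not> singular G v (set (map y [0..<2*m]))"
    and "\<exists>w\<in>set (map y [0..<2*m]). \<not> singular G w (set (map x [0..<2*n]))"
  shows "\<exists>r<2*m. \<exists>s<2*n.
           alt_cycle G [x 0, y r, y ((r+1) mod (2*m)), y ((r+2) mod (2*m))]
         \<and> alt_cycle G [y 0, x s, x ((s+1) mod (2*n)), x ((s+2) mod (2*n))]"
proof -
  note A = assms
  have gs: "cgraph G" "verts G = verts G1 \<union> verts G2" "induced G (verts G1) = G1" "induced G (verts G2) = G2"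
    "\<And>u w. u \<in> verts G1 \<Longrightarrow> w \<in> verts G2 \<Longrightarrow> ecol G u w \<noteq> None"
    using A(6) unfolding cgsum_def by auto
  define X where "X i = x (nat (i mod int (2*n)))" for i
  define Y where "Y j = y (nat (j mod int (2*m)))" for j
  interpret c1: cyc G G1 "verts G1" x "2*n" X
    using gs A(4) X_def by unfold_locales auto
  interpret c2: cyc G G2 "verts G2" y "2*m" Y
    using gs A(5) Y_def by unfold_locales auto
  define C where "C i j = the (ecol G (X i) (Y j))" for i j
  have CS: "ecol G (X i) (Y j) = Some (C i j)" for i j
    using gs(5)[OF c1.Xin c2.Xin] unfolding C_def by auto
  have CS': "ecol G (Y j) (X i) = Some (C i j)" for i j using CS c1.symG by metis
  have colper: "C i j = C (i mod int (2*n)) (j mod int (2*m))" for i j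
    unfolding C_def X_def Y_def by simp
  have nogood: "C (i + (if c1.ec i = C i j then 1 else -1)) (j + (if c2.ec j = C i j then 1 else -1)) \<noteq> C i j" for i j
  proof
    assume H: "C (i + (if c1.ec i = C i j then 1 else -1)) (j + (if c2.ec j = C i j then 1 else -1)) = C i j"
    have "has_good_pair G (map x [0..<2*n]) (map y [0..<2*m])"
      unfolding has_good_pair_def
      apply (rule bexI[OF _ c1.Xset[of i]])
      apply (rule bexI[OF _ c2.Xset[of j]])
      apply (rule exI[of _ "C i j"])
      apply (rule exI[of _ "X (i + (if c1.ec i = C i j then 1 else -1))"])
      apply (rule exI[of _ "Y (j + (if c2.ec j = C i j then 1 else -1))"])
      apply (intro conjI)
      apply (rule CS)
      apply (rule c1.nbr)
      apply (rule c2.nbr)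
      using CS[of "i + (if c1.ec i = C i j then 1 else -1)" "j + (if c2.ec j = C i j then 1 else -1)"] H
      by simp
    then show False using A(7) by simp
  qed
  have ns1: "\<exists>i j1 j2. C i j1 \<noteq> C i j2"
  proof -
    obtain v where v: "v \<in> set (map x [0..<2*n])" "\<not> singular G v (set (map y [0..<2*m]))" using A(8) by blast
    obtain a where a: "a < 2*n" "v = X (int a)" using c1.setX[OF v(1)] by blast
    obtain w1 where w1: "w1 \<in> set (map y [0..<2*m])" "ecol G v w1 \<noteq> Some Red"
      using v(2) unfolding singular_def red_singular_def by blast
    obtain w2 where w2: "w2 \<in> set (map y [0..<2*m])" "ecol G v w2 \<noteq> Some Blue"
      using v(2) unfolding singular_def blue_singular_def by blast
    obtain b1 where b1: "w1 = Y (int b1)" using c2.setX[OF w1(1)] by blast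
    obtain b2 where b2: "w2 = Y (int b2)" using c2.setX[OF w2(1)] by blast
    have "C (int a) (int b1) \<noteq> Red" "C (int a) (int b2) \<noteq> Blue" using w1 w2 a b1 b2 CS by auto
    then have "C (int a) (int b1) \<noteq> C (int a) (int b2)" by (metis color.exhaust)
    then show ?thesis by blast
  qed
  have ns2: "\<exists>j i1 i2. C i1 j \<noteq> C i2 j"
  proof -
    obtain v where v: "v \<in> set (map y [0..<2*m])" "\<not> singular G v (set (map x [0..<2*n]))" using A(9) by blast
    obtain a where a: "a < 2*m" "v = Y (int a)" using c2.setX[OF v(1)] by blast
    obtain w1 where w1: "w1 \<in> set (map x [0..<2*n])" "ecol G v w1 \<noteq> Some Red"
      using v(2) unfolding singular_def red_singular_def by blast
    obtain w2 where w2: "w2 \<in> set (map x [0..<2*n])" "ecol G v w2 \<noteq> Some Blue"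
      using v(2) unfolding singular_def blue_singular_def by blast
    obtain b1 where b1: "w1 = X (int b1)" using c1.setX[OF w1(1)] by blast
    obtain b2 where b2: "w2 = X (int b2)" using c1.setX[OF w2(1)] by blast
    have "C (int b1) (int a) \<noteq> Red" "C (int b2) (int a) \<noteq> Blue" using w1 w2 a b1 b2 CS' by auto
    then have "C (int b1) (int a) \<noteq> C (int b2) (int a)" by (metis color.exhaust)
    then show ?thesis by blast
  qed
  have n3: "2*n \<ge> 3" by (rule c1.N3)
  have m3: "2*m \<ge> 3" by (rule c2.N3)
  interpret a1: absG C c1.ec c2.ec "int (2*n)" "int (2*m)"
    apply unfold_locales
    using n3 m3 colper c1.ec_alt c2.ec_alt nogood by auto
  interpret a2: absG "\<lambda>i j. C j i" c2.ec c1.ec "int (2*m)" "int (2*n)"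
    apply unfold_locales
    using n3 m3 colper c1.ec_alt c2.ec_alt nogood by auto
  obtain r where r: "C 0 r = c2.ec (r+1)" "C 0 (r+2) = c2.ec r" using a1.main[OF ns1 ns2] by blast
  have ns1': "\<exists>i j1 j2. (\<lambda>i j. C j i) i j1 \<noteq> (\<lambda>i j. C j i) i j2" using ns2 by simp
  have ns2': "\<exists>j i1 i2. (\<lambda>i j. C j i) i1 j \<noteq> (\<lambda>i j. C j i) i2 j" using ns1 by simp
  obtain s where s: "C s 0 = c1.ec (s+1)" "C (s+2) 0 = c1.ec s" using a2.main[OF ns1' ns2'] by auto
  define r' where "r' = nat (r mod int (2*m))"
  define s' where "s' = nat (s mod int (2*n))"
  have r'l: "r' < 2*m" unfolding r'_def by (rule c2.Xidx)
  have s'l: "s' < 2*n" unfolding s'_def by (rule c1.Xidx)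
  have yr: "y r' = Y r" "y ((r'+1) mod (2*m)) = Y (r+1)" "y ((r'+2) mod (2*m)) = Y (r+2)"
    using c2.Xadd[of r 1] c2.Xadd[of r 2] unfolding r'_def Y_def by simp_all
  have xs: "x s' = X s" "x ((s'+1) mod (2*n)) = X (s+1)" "x ((s'+2) mod (2*n)) = X (s+2)"
    using c1.Xadd[of s 1] c1.Xadd[of s 2] unfolding s'_def X_def by simp_all
  have x0: "x 0 = X 0" unfolding X_def by simp
  have y0: "y 0 = Y 0" unfolding Y_def by simp
  have disj: "X i \<noteq> Y j" for i j
  proof
    assume "X i = Y j"
    then have "X i \<in> verts G1 \<inter> verts G2" using c1.Xin[of i] c2.Xin[of j] by simp
    then show False using A(3) by simp
  qed
  have Yne: "Y (r + k) \<noteq> Y (r + l)" if "0 \<le> l" "l < k" "k < int (2*m)" for k l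
  proof
    assume eq: "Y (r + k) = Y (r + l)"
    have "(r + k) mod int (2*m) = (r + l) mod int (2*m)" by (rule c2.Xinj[OF eq])
    then have "((r + l) + (k - l)) mod int (2*m) = (r + l) mod int (2*m)" by simp
    moreover have "0 < k - l" "k - l < int (2*m)" using that by linarith+
    ultimately show False using mod_shift_ne[of "k - l" "int (2*m)" "r + l"] by blast
  qed
  have Xne: "X (s + k) \<noteq> X (s + l)" if "0 \<le> l" "l < k" "k < int (2*n)" for k l
  proof
    assume eq: "X (s + k) = X (s + l)"
    have "(s + k) mod int (2*n) = (s + l) mod int (2*n)" by (rule c1.Xinj[OF eq])
    then have "((s + l) + (k - l)) mod int (2*n) = (s + l) mod int (2*n)" by simp
    moreover have "0 < k - l" "k - l < int (2*n)" using that by linarith+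
    ultimately show False using mod_shift_ne[of "k - l" "int (2*n)" "s + l"] by blast
  qed
  have cyc1: "alt_cycle G [X 0, Y r, Y (r+1), Y (r+2)]"
  proof (rule alt4)
    show "distinct [X 0, Y r, Y (r+1), Y (r+2)]"
    proof -
      have "Y (r + 1) \<noteq> Y (r + 0)" by (rule Yne) (use m3 in simp_all)
      moreover have "Y (r + 2) \<noteq> Y (r + 0)" by (rule Yne) (use m3 in simp_all)
      moreover have "Y (r + 2) \<noteq> Y (r + 1)" by (rule Yne) (use m3 in simp_all)
      ultimately show ?thesis using disj disj[symmetric] by simp
    qed
    show "ecol G (X 0) (Y r) = Some (C 0 r)" by (rule CS)
    show "ecol G (Y r) (Y (r+1)) = Some (c2.ec r)" by (rule c2.ec)
    show "ecol G (Y (r+1)) (Y (r+2)) = Some (c2.ec (r+1))" using c2.ec[of "r+1"] by (simp add: add.assoc)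
    show "ecol G (Y (r+2)) (X 0) = Some (C 0 (r+2))" by (rule CS')
    show "C 0 r \<noteq> c2.ec r" using r c2.ec_alt[of r] by simp
    show "c2.ec r \<noteq> c2.ec (r+1)" using c2.ec_alt[of r] by simp
    show "c2.ec (r+1) \<noteq> C 0 (r+2)" using r c2.ec_alt[of r] by simp
    show "C 0 (r+2) \<noteq> C 0 r" using r c2.ec_alt[of r] by simp
  qed
  have cyc2: "alt_cycle G [Y 0, X s, X (s+1), X (s+2)]"
  proof (rule alt4)
    show "distinct [Y 0, X s, X (s+1), X (s+2)]"
    proof -
      have "X (s + 1) \<noteq> X (s + 0)" by (rule Xne) (use n3 in simp_all)
      moreover have "X (s + 2) \<noteq> X (s + 0)" by (rule Xne) (use n3 in simp_all)
      moreover have "X (s + 2) \<noteq> X (s + 1)" by (rule Xne) (use n3 in simp_all)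
      ultimately show ?thesis using disj disj[symmetric] by simp
    qed
    show "ecol G (Y 0) (X s) = Some (C s 0)" by (rule CS')
    show "ecol G (X s) (X (s+1)) = Some (c1.ec s)" by (rule c1.ec)
    show "ecol G (X (s+1)) (X (s+2)) = Some (c1.ec (s+1))" using c1.ec[of "s+1"] by (simp add: add.assoc)
    show "ecol G (X (s+2)) (Y 0) = Some (C (s+2) 0)" by (rule CS)
    show "C s 0 \<noteq> c1.ec s" using s c1.ec_alt[of s] by simp
    show "c1.ec s \<noteq> c1.ec (s+1)" using c1.ec_alt[of s] by simp
    show "c1.ec (s+1) \<noteq> C (s+2) 0" using s c1.ec_alt[of s] by simp
    show "C (s+2) 0 \<noteq> C s 0" using s c1.ec_alt[of s] by simp
  qed
  show ?thesis
    apply (rule exI[of _ r'], intro conjI impI r'l)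
    apply (rule exI[of _ s'], intro conjI impI s'l)
    unfolding yr xs x0 y0 using cyc1 cyc2 by auto
qed

end
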